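(* Let $\mathbf{u}$ be quasi-definite with SMOP $(P_n)$ satisfying $xP_n=P_{n+1}+b_nP_n+a_nP_{n-1}$, and suppose $\mathbf{u}^{-1}$ is quasi-definite with SMOP $(P^-_n)$. Let $J^{(1)}$ and $J^-$ be the monic Jacobi matrices of $\mathbf{u}^{(1)}$ and $\mathbf{u}^{-1}$. Define $\alpha_{1,0}=b_0+b_1$ and, for $n\ge2$, $$\alpha_{n,n-1}=-\frac{W(P_{n+1},P_{n-1})(0)}{W(P_n,P_{n-1})(0)},\qquad \alpha_{n,n-2}=\frac{W(P_{n+1},P_n)(0)}{W(P_n,P_{n-1})(0)},$$ and for $n\ge0$ $$\beta_{n,n}=\frac{W(P^-_{n+1},P^-_{n+2})(0)}{W(P^-_n,P^-_{n+1})(0)},\qquad \beta_{n,n+1}=-\frac{W(P^-_n,P^-_{n+2})(0)}{W(P^-_n,P^-_{n+1})(0)}$$ (all denominators are nonzero). Let $L$ be the lower triangular matrix with $L_{n,n}=1$, $L_{n,n-1}=\alpha_{n,n-1}$, $L_{n,n-2}=\alpha_{n,n-2}$, other entries $0$, and $U$ the upper triangular matrix with $U_{n,n}=\beta_{n,n}$, $U_{n,n+1}=\beta_{n,n+1}$, $U_{n,n+2}=1$, other entries $0$. Then $P^-_n=P^{(1)}_n+\alpha_{n,n-1}P^{(1)}_{n-1}+\alpha_{n,n-2}P^{(1)}_{n-2}$, $x^2P^{(1)}_n=P^-_{n+2}+\beta_{n,n+1}P^-_{n+1}+\beta_{n,n}P^-_n$, and $$\big(J^{(1)}\big)^2=UL,\qquad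 \big(J^-\big)^2=LU.$$
   Context: Linear functionals on complex polynomials, moments $\mathbf{u}_n$; the inverse $\mathbf{u}^{-1}$ is the functional with $\sum_{k=0}^n\mathbf{u}_k(\mathbf{u}^{-1})_{n-k}=\delta_{n,0}$. Quasi-definite: all leading principal Hankel minors of the moments nonzero; then a unique sequence of monic orthogonal polynomials (SMOP) exists with $xP_n=P_{n+1}+b_nP_n+a_nP_{n-1}$, $P_{-1}=0$, $P_0=1$, $a_n\ne0$. $\mathbf{u}^{(1)}$ denotes a (quasi-definite) functional whose SMOP is the sequence of associated polynomials of the first kind: monic, $xP^{(1)}_n=P^{(1)}_{n+1}+b_{n+1}P^{(1)}_n+a_{n+1}P^{(1)}_{n-1}$, $P^{(1)}_{-1}=0$, $P^{(1)}_0=1$ (with convention $P^{(1)}_{-1}=0$ in the expansions). The monic Jacobi matrix of a functional is the tridiagonal matrix with diagonal $(b_0,b_1,\dots)$, superdiagonal $1$'s and subdiagonal $(a_1,a_2,\dots)$ of its SMOP recurrence. Wronskian $W(p,q)(x)=p(x)q'(x)-p'(x)q(x)$. *)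

theory Defs
  imports "Jordan_Normal_Form.Determinant" "HOL-Computational_Algebra.Polynomial"
begin

text \<open>A linear functional on complex polynomials is represented by its moment
  sequence m; its action on a polynomial p is the following.\<close>
definition lin_fun :: "(nat \<Rightarrow> complex) \<Rightarrow> complex poly \<Rightarrow> complex" where
  "lin_fun m p = (\<Sum>k\<le>degree p. coeff p k * m k)"

definition inv_moments :: "(nat \<Rightarrow> complex) \<Rightarrow> nat \<Rightarrow> complex" where
  "inv_moments m = (THE v. \<forall>n. (\<Sum>k\<le>n. m k * v (n - k)) = (if n = 0 then 1 else 0))"

definition quasi_definite :: "(nat \<Rightarrow> complex) \<Rightarrow> bool" where
  "quasi_definite m \<longleftrightarrow>
     (\<forall>n. det (mat (Suc n) (Suc n) (\<lambda>(i, j). m (i + j))) \<noteq> 0)"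

definition is_SMOP :: "(nat \<Rightarrow> complex) \<Rightarrow> (nat \<Rightarrow> complex poly) \<Rightarrow> bool" where
  "is_SMOP m P \<longleftrightarrow>
     (\<forall>n. degree (P n) = n \<and> lead_coeff (P n) = 1) \<and>
     (\<forall>n k. n \<noteq> k \<longrightarrow> lin_fun m (P n * P k) = 0) \<and>
     (\<forall>n. lin_fun m (P n * P n) \<noteq> 0)"

definition three_term :: "(nat \<Rightarrow> complex poly) \<Rightarrow> (nat \<Rightarrow> complex) \<Rightarrow> (nat \<Rightarrow> complex) \<Rightarrow> bool" where
  "three_term Q aa bb \<longleftrightarrow>
     [:0, 1:] * Q 0 = Q 1 + smult (bb 0) (Q 0) \<and>
     (\<forall>n. [:0, 1:] * Q (Suc n) = Q (Suc (Suc n)) + smult (bb (Suc n)) (Q (Suc n))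
                                    + smult (aa (Suc n)) (Q n))"

fun assoc1 :: "(nat \<Rightarrow> complex) \<Rightarrow> (nat \<Rightarrow> complex) \<Rightarrow> nat \<Rightarrow> complex poly" where
  "assoc1 a b 0 = 1"
| "assoc1 a b (Suc 0) = [:- b 1, 1:]"
| "assoc1 a b (Suc (Suc n)) =
     [:- b (Suc (Suc n)), 1:] * assoc1 a b (Suc n) - smult (a (Suc (Suc n))) (assoc1 a b n)"

type_synonym inf_mat = "nat \<Rightarrow> nat \<Rightarrow> complex"

definition monic_jacobi :: "(nat \<Rightarrow> complex) \<Rightarrow> (nat \<Rightarrow> complex) \<Rightarrow> inf_mat" where
  "monic_jacobi aa bb i j =
     (if j = i then bb i else if j = Suc i then 1 else if i = Suc j then aa i else 0)"

text \<open>Matrix product; it is the usual product for row-finite A (every matrix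
  used below is banded).\<close>
definition inf_mat_mult :: "inf_mat \<Rightarrow> inf_mat \<Rightarrow> inf_mat" where
  "inf_mat_mult A B i j = (\<Sum>k | A i k \<noteq> 0. A i k * B k j)"

definition wronskian :: "complex poly \<Rightarrow> complex poly \<Rightarrow> complex poly" where
  "wronskian p q = p * pderiv q - pderiv p * q"

definition W0 :: "complex poly \<Rightarrow> complex poly \<Rightarrow> complex" where
  "W0 p q = poly (wronskian p q) 0"

definition alpha1 :: "(nat \<Rightarrow> complex poly) \<Rightarrow> (nat \<Rightarrow> complex) \<Rightarrow> nat \<Rightarrow> complex" where
  "alpha1 P b n = (if n = 1 then b 0 + b 1
     else - W0 (P (n + 1)) (P (n - 1)) / W0 (P n) (P (n - 1)))"

definition alpha2 :: "(nat \<Rightarrow> complex poly) \<Rightarrow> nat \<Rightarrow> complex" where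
  "alpha2 P n = W0 (P (n + 1)) (P n) / W0 (P n) (P (n - 1))"

definition beta0 :: "(nat \<Rightarrow> complex poly) \<Rightarrow> nat \<Rightarrow> complex" where
  "beta0 Pm n = W0 (Pm (n + 1)) (Pm (n + 2)) / W0 (Pm n) (Pm (n + 1))"

definition beta1 :: "(nat \<Rightarrow> complex poly) \<Rightarrow> nat \<Rightarrow> complex" where
  "beta1 Pm n = - W0 (Pm n) (Pm (n + 2)) / W0 (Pm n) (Pm (n + 1))"

definition Lmat :: "(nat \<Rightarrow> complex poly) \<Rightarrow> (nat \<Rightarrow> complex) \<Rightarrow> inf_mat" where
  "Lmat P b i j = (if j = i then 1 else if Suc j = i then alpha1 P b i
      else if Suc (Suc j) = i then alpha2 P i else 0)"

definition Umat :: "(nat \<Rightarrow> complex poly) \<Rightarrow> inf_mat" where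
  "Umat Pm i j = (if j = i then beta0 Pm i else if j = Suc i then beta1 Pm i
      else if j = Suc (Suc i) then 1 else 0)"

end

theory Submission
  imports Defs "HOL-Computational_Algebra.Formal_Power_Series"
begin


lemma lin_fun_eq:
  assumes "\<forall>k\<ge>N. coeff p k = 0"
  shows "lin_fun m p = (\<Sum>k<N. coeff p k * m k)"
proof -
  have "degree p < N \<or> p = 0"
    using assms by (metis coeff_0 le_degree leading_coeff_0_iff not_le)
  then show ?thesis
  proof
    assume d: "degree p < N"
    show ?thesis unfolding lin_fun_def
      by (rule sum.mono_neutral_left) (use d assms in \<open>auto simp: coeff_eq_0\<close>)
  next
    assume "p = 0" then show ?thesis by (simp add: lin_fun_def)
  qed
qed

lemma lin_fun_add: "lin_fun m (p + q) = lin_fun m p + lin_fun m q"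
proof -
  define N where "N = Suc (degree p + degree q)"
  have a: "\<forall>k\<ge>N. coeff p k = 0" "\<forall>k\<ge>N. coeff q k = 0"
    unfolding N_def by (auto intro!: coeff_eq_0)
  then have "\<forall>k\<ge>N. coeff (p+q) k = 0" by simp
  note a this
  then show ?thesis by (simp add: lin_fun_eq[of N] sum.distrib distrib_right)
qed

lemma lin_fun_smult: "lin_fun m (smult c p) = c * lin_fun m p"
proof -
  define N where "N = Suc (degree p)"
  have "\<forall>k\<ge>N. coeff p k = 0" "\<forall>k\<ge>N. coeff (smult c p) k = 0"
    unfolding N_def by (auto intro!: coeff_eq_0)
  then show ?thesis by (simp add: lin_fun_eq[of N] sum_distrib_left mult.assoc)
qed

lemma lin_fun_0[simp]: "lin_fun m 0 = 0"
  by (simp add: lin_fun_def)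

lemma lin_fun_minus: "lin_fun m (- p) = - lin_fun m p"
  using lin_fun_smult[of m "-1" p] by simp

lemma lin_fun_diff: "lin_fun m (p - q) = lin_fun m p - lin_fun m q"
  using lin_fun_add[of m p "-q"] lin_fun_minus[of m q] by simp

lemma lin_fun_sum: "finite A \<Longrightarrow> lin_fun m (\<Sum>x\<in>A. f x) = (\<Sum>x\<in>A. lin_fun m (f x))"
  by (induction A rule: finite_induct) (simp_all add: lin_fun_add)

lemma lin_fun_const[simp]: "lin_fun m [:c:] = c * m 0"
  by (simp add: lin_fun_def)

lemma lin_fun_one[simp]: "lin_fun m 1 = m 0"
  by (simp add: lin_fun_def)

lemma lin_fun_X: "lin_fun m ([:0,1:] * p) = lin_fun (\<lambda>k. m (Suc k)) p"
proof -
  define N where "N = Suc (degree p)"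
  have h1: "\<forall>k\<ge>N. coeff p k = 0" unfolding N_def by (auto intro!: coeff_eq_0)
  have h2: "\<forall>k\<ge>Suc N. coeff ([:0,1:] * p) k = 0"
    using h1 by (auto simp: coeff_pCons split: nat.splits)
  have "lin_fun m ([:0,1:] * p) = (\<Sum>k<Suc N. coeff ([:0,1:] * p) k * m k)"
    by (rule lin_fun_eq[OF h2])
  also have "\<dots> = coeff ([:0,1:] * p) 0 * m 0 + (\<Sum>k<N. coeff ([:0,1:] * p) (Suc k) * m (Suc k))"
    by (rule sum.lessThan_Suc_shift)
  also have "\<dots> = (\<Sum>k<N. coeff p k * m (Suc k))" by simp
  finally show ?thesis by (simp add: lin_fun_eq[OF h1])
qed

lemma pCons_eq_X: "pCons (a::complex) p = [:a:] + [:0,1:] * p"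
  by (auto simp: poly_eq_iff coeff_pCons split: nat.split)

lemma W0_coeff: "W0 p q = coeff p 0 * coeff q 1 - coeff p 1 * coeff q 0"
  by (simp add: W0_def wronskian_def poly_0_coeff_0 coeff_mult_0 coeff_pderiv)


definition monicseq :: "(nat \<Rightarrow> complex poly) \<Rightarrow> bool" where
  "monicseq Q \<longleftrightarrow> (\<forall>n. coeff (Q n) n = 1 \<and> (\<forall>j>n. coeff (Q n) j = 0))"

lemma SMOP_monicseq: "is_SMOP m Q \<Longrightarrow> monicseq Q"
  unfolding is_SMOP_def monicseq_def by (metis coeff_eq_0)

lemma span:
  assumes "monicseq Q"
  shows "\<forall>j\<ge>N. coeff p j = 0 \<Longrightarrow> \<exists>c. p = (\<Sum>k<N. smult (c k) (Q k))"
proof (induction N arbitrary: p)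
  case 0
  then have "p = 0" by (simp add: poly_eq_iff)
  then show ?case by simp
next
  case (Suc N)
  define p' where "p' = p - smult (coeff p N) (Q N)"
  have "\<forall>j\<ge>N. coeff p' j = 0"
  proof (intro allI impI)
    fix j assume "N \<le> j"
    then consider "j = N" | "j \<ge> Suc N" by linarith
    then show "coeff p' j = 0"
      using Suc.prems assms unfolding p'_def monicseq_def
      by cases auto
  qed
  from Suc.IH[OF this] obtain c where c: "p' = (\<Sum>k<N. smult (c k) (Q k))" by blast
  have s1: "(\<Sum>k<N. smult ((c(N := coeff p N)) k) (Q k)) = (\<Sum>k<N. smult (c k) (Q k))"
    by (rule sum.cong) auto
  have "p = p' + smult (coeff p N) (Q N)" unfolding p'_def by simp
  then have "p = (\<Sum>k<Suc N. smult ((c(N := coeff p N)) k) (Q k))"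
    using c s1 by simp
  then show ?case by blast
qed

lemma orth_below:
  assumes sm: "is_SMOP m Q" and h: "\<forall>j\<ge>n. coeff p j = 0"
  shows "lin_fun m (Q n * p) = 0"
proof -
  obtain c where c: "p = (\<Sum>k<n. smult (c k) (Q k))"
    using span[OF SMOP_monicseq[OF sm] h] by blast
  have "lin_fun m (Q n * p) = (\<Sum>k<n. c k * lin_fun m (Q n * Q k))"
    unfolding c by (simp add: sum_distrib_left lin_fun_sum lin_fun_smult)
  also have "\<dots> = 0" using sm unfolding is_SMOP_def by auto
  finally show ?thesis .
qed

lemma orth_coeff:
  assumes sm: "is_SMOP m Q" and h: "\<forall>j>n. coeff p j = 0"
  shows "lin_fun m (Q n * p) = coeff p n * lin_fun m (Q n * Q n)"
proof -
  have mq: "monicseq Q" by (rule SMOP_monicseq[OF sm])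
  have "\<forall>j\<ge>n. coeff (p - smult (coeff p n) (Q n)) j = 0"
  proof (intro allI impI)
    fix j assume "n \<le> j"
    then consider "j = n" | "j > n" by linarith
    then show "coeff (p - smult (coeff p n) (Q n)) j = 0"
    proof cases
      case 1 then show ?thesis using mq unfolding monicseq_def by simp
    next
      case 2 then show ?thesis using mq h unfolding monicseq_def by simp
    qed
  qed
  from orth_below[OF sm this]
  have "lin_fun m (Q n * (p - smult (coeff p n) (Q n))) = 0" .
  moreover have "Q n * (p - smult (coeff p n) (Q n)) = Q n * p - smult (coeff p n) (Q n * Q n)"
    by (simp add: right_diff_distrib)
  ultimately show ?thesis by (simp add: lin_fun_diff lin_fun_smult)
qed

lemma poly_monom_sum:
  assumes "\<forall>j\<ge>n. coeff p j = 0"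
  shows "p = (\<Sum>j<n. monom (coeff p j) j)"
proof (rule poly_eqI)
  fix i
  show "coeff p i = coeff (\<Sum>j<n. monom (coeff p j) j) i"
    by (cases "i < n") (simp_all add: coeff_sum coeff_monom assms)
qed

lemma monom_orth:
  assumes h: "\<forall>j<n. lin_fun m (R * monom 1 j) = 0" and p: "\<forall>j\<ge>n. coeff p j = 0"
  shows "lin_fun m (R * p) = 0"
proof -
  have "R * p = (\<Sum>j<n. smult (coeff p j) (R * monom 1 j))"
  proof -
    have e: "R * monom c j = smult c (R * monom 1 j)" for c j
    proof -
      have "monom c j = smult c (monom 1 j)" by (simp add: smult_monom)
      then show ?thesis by simp
    qed
    have "R * p = (\<Sum>j<n. R * monom (coeff p j) j)"
      by (subst poly_monom_sum[OF p]) (simp add: sum_distrib_left)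
    also have "\<dots> = (\<Sum>j<n. smult (coeff p j) (R * monom 1 j))"
      by (rule sum.cong[OF refl]) (rule e)
    finally show ?thesis .
  qed
  then show ?thesis using h by (simp add: lin_fun_sum lin_fun_smult)
qed

lemma ND:
  assumes sm: "is_SMOP m Q" and c: "\<forall>j\<ge>n. coeff R j = 0"
    and o: "\<forall>j<n. lin_fun m (R * monom 1 j) = 0"
  shows "R = 0"
proof (rule ccontr)
  assume R: "R \<noteq> 0"
  define d where "d = degree R"
  have lc: "coeff R d \<noteq> 0" using R unfolding d_def by simp
  then have dn: "d < n" using c by (meson not_le)
  have mq: "monicseq Q" by (rule SMOP_monicseq[OF sm])
  have "\<forall>j\<ge>n. coeff (Q d) j = 0" using mq dn unfolding monicseq_def by auto
  from monom_orth[OF o this] have "lin_fun m (R * Q d) = 0" .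
  moreover have "lin_fun m (Q d * R) = coeff R d * lin_fun m (Q d * Q d)"
    by (rule orth_coeff[OF sm]) (simp add: d_def coeff_eq_0)
  ultimately show False using lc sm unfolding is_SMOP_def by (simp add: mult.commute)
qed

lemma SMOP_from_monom:
  assumes mq: "monicseq Q"
    and o: "\<And>n j. j < n \<Longrightarrow> lin_fun m (Q n * monom 1 j) = 0"
    and nz: "\<And>n. lin_fun m (Q n * monom 1 n) \<noteq> 0"
  shows "is_SMOP m Q"
proof -
  have deg: "degree (Q n) = n" for n
    using mq unfolding monicseq_def
    by (metis antisym degree_le le_degree zero_neq_one)
  have lc: "lead_coeff (Q n) = 1" for n using deg mq unfolding monicseq_def by simp
  have ob: "lin_fun m (Q n * p) = 0" if "\<forall>j\<ge>n. coeff p j = 0" for n p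
    using monom_orth[of n m "Q n" p] o that by blast
  have orth: "lin_fun m (Q n * Q k) = 0" if "n \<noteq> k" for n k
  proof (cases "k < n")
    case True
    then show ?thesis using mq unfolding monicseq_def by (intro ob) auto
  next
    case False
    then have "n < k" using that by simp
    then have "lin_fun m (Q k * Q n) = 0" using mq unfolding monicseq_def by (intro ob) auto
    then show ?thesis by (simp add: mult.commute)
  qed
  have "lin_fun m (Q n * Q n) \<noteq> 0" for n
  proof -
    have "\<forall>j\<ge>n. coeff (Q n - monom 1 n) j = 0"
      using mq unfolding monicseq_def by (auto simp: coeff_monom le_less)
    from ob[OF this] have "lin_fun m (Q n * Q n) = lin_fun m (Q n * monom 1 n)"
      by (simp add: right_diff_distrib lin_fun_diff)
    then show ?thesis using nz by simp
  qed
  then show ?thesis unfolding is_SMOP_def using deg lc orth by blast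
qed

lemma expand3:
  assumes sm: "is_SMOP m Q" and c: "\<forall>j>Suc n. coeff R j = 0"
    and o: "\<forall>j<n. lin_fun m (R * monom 1 j) = 0"
  shows "\<exists>c1 c0. R = smult c1 (Q (Suc n)) + smult c0 (Q n)"
proof -
  have mq: "monicseq Q" by (rule SMOP_monicseq[OF sm])
  define c1 where "c1 = coeff R (Suc n)"
  define c0 where "c0 = coeff (R - smult c1 (Q (Suc n))) n"
  define T where "T = R - smult c1 (Q (Suc n)) - smult c0 (Q n)"
  have "\<forall>j\<ge>n. coeff T j = 0"
  proof (intro allI impI)
    fix j assume "n \<le> j"
    then consider "j = n" | "j = Suc n" | "j > Suc n" by linarith
    then show "coeff T j = 0"
      using c mq unfolding T_def c0_def c1_def monicseq_def by cases auto
  qed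
  moreover have "\<forall>j<n. lin_fun m (T * monom 1 j) = 0"
  proof (intro allI impI)
    fix j assume j: "j < n"
    have "lin_fun m (Q k * monom 1 j) = 0" if "n \<le> k" for k
      using j that by (intro orth_below[OF sm]) (auto simp: coeff_monom)
    moreover have "T * monom 1 j = R * monom 1 j - smult c1 (Q (Suc n) * monom 1 j)
        - smult c0 (Q n * monom 1 j)" unfolding T_def by (simp add: algebra_simps)
    ultimately show "lin_fun m (T * monom 1 j) = 0"
      using o j by (simp add: lin_fun_diff lin_fun_smult)
  qed
  ultimately have "T = 0" by (rule ND[OF sm])
  moreover have "R = T + smult c1 (Q (Suc n)) + smult c0 (Q n)" unfolding T_def by simp
  ultimately show ?thesis by auto
qed

lemma dep2:
  fixes x0 y0 x1 y1 :: complex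
  assumes h: "x0 * y1 - y0 * x1 = 0"
  shows "\<exists>s t. \<not> (s = 0 \<and> t = 0) \<and> s * x0 + t * x1 = 0 \<and> s * y0 + t * y1 = 0"
proof (cases "x0 = 0 \<and> x1 = 0")
  case False
  have e1: "x1 * x0 + (-x0) * x1 = 0" by (simp add: mult.commute)
  have "x1 * y0 + (-x0) * y1 = -(x0 * y1 - y0 * x1)" by (simp add: algebra_simps)
  with h have e2: "x1 * y0 + (-x0) * y1 = 0" by simp
  have "\<not> (x1 = 0 \<and> -x0 = 0)" using False by auto
  with e1 e2 show ?thesis by blast
next
  case True
  show ?thesis
  proof (cases "y0 = 0 \<and> y1 = 0")
    case False
    have e: "y1 * x0 + (-y0) * x1 = 0" "y1 * y0 + (-y0) * y1 = 0" using True by (simp_all add: mult.commute)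
    have "\<not> (y1 = 0 \<and> -y0 = 0)" using False by auto
    with e show ?thesis by blast
  next
    case True2: True
    have "1 * x0 + 0 * x1 = 0" "1 * y0 + 0 * y1 = 0" "\<not> ((1::complex) = 0 \<and> (0::complex) = 0)" using True True2 by simp_all
    then show ?thesis by blast
  qed
qed

lemma induct2[case_names 0 1 step]:
  assumes "P 0" "P 1" "\<And>n. P n \<Longrightarrow> P (Suc n) \<Longrightarrow> P (Suc (Suc n))"
  shows "P n"
proof -
  have "P n \<and> P (Suc n)" by (induction n) (use assms in auto)
  then show ?thesis by simp
qed

lemma inv_moments_conv:
  assumes "u 0 \<noteq> 0"
  shows "(\<Sum>k\<le>n. u k * inv_moments u (n - k)) = (if n = 0 then 1 else 0)"
proof -
  define U where "U = Abs_fps u"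
  have U0: "fps_nth U 0 \<noteq> 0" using assms by (simp add: U_def)
  define V where "V = inverse U"
  have UV: "U * V = 1" unfolding V_def by (rule inverse_mult_eq_1'[OF U0])
  have conv: "\<forall>n. (\<Sum>k\<le>n. u k * fps_nth V (n - k)) = (if n = 0 then 1 else 0)"
  proof
    fix n
    have "fps_nth (U * V) n = (if n = 0 then 1 else 0)" using UV by simp
    then show "(\<Sum>k\<le>n. u k * fps_nth V (n - k)) = (if n = 0 then 1 else 0)"
      by (simp add: fps_mult_nth U_def atLeast0AtMost)
  qed
  have uniq: "v = fps_nth V" if "\<forall>n. (\<Sum>k\<le>n. u k * v (n - k)) = (if n = 0 then 1 else 0)" for v
  proof -
    have "U * Abs_fps v = 1"
      using that by (intro fps_ext) (simp add: fps_mult_nth U_def atLeast0AtMost)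
    then have "inverse U = Abs_fps v" by (rule fps_inverse_unique)
    then show ?thesis by (simp add: V_def fun_eq_iff)
  qed
  have "inv_moments u = fps_nth V"
    unfolding inv_moments_def
    apply (rule the_equality)
     apply (rule conv)
    apply (erule uniq)
    done
  then show ?thesis by (subst \<open>inv_moments u = fps_nth V\<close>) (rule conv[rule_format])
qed



definition Bseq :: "(nat \<Rightarrow> complex) \<Rightarrow> (nat \<Rightarrow> complex) \<Rightarrow> nat \<Rightarrow> complex poly" where
  "Bseq a b k = (case k of 0 \<Rightarrow> 0 | Suc j \<Rightarrow> assoc1 a b j)"

lemma Bseq_simps[simp]: "Bseq a b 0 = 0" "Bseq a b (Suc j) = assoc1 a b j"
  by (simp_all add: Bseq_def)

lemma XX_eq: "[:0,0,1:] * p = [:0,1:] * ([:0,1:] * (p::complex poly))"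
  by simp

lemma assoc1_rec: "assoc1 a b (Suc (Suc n)) = [:0,1:] * assoc1 a b (Suc n)
   - smult (b (Suc (Suc n))) (assoc1 a b (Suc n)) - smult (a (Suc (Suc n))) (assoc1 a b n)"
  by (simp add: algebra_simps)

declare assoc1.simps(3)[simp del]

lemma Brec: "Bseq a b (Suc (Suc k)) = [:0,1:] * Bseq a b (Suc k)
   - smult (b (Suc k)) (Bseq a b (Suc k)) - smult (a (Suc k)) (Bseq a b k)"
proof (cases k)
  case 0 then show ?thesis by simp
next
  case (Suc j) then show ?thesis using assoc1_rec[of a b j] by simp
qed

lemma coeff_X_Suc[simp]: "coeff ([:0,1:] * p) (Suc j) = coeff (p::complex poly) j"
  by simp

lemma coeff_X_0[simp]: "coeff ([:0,1:] * (p::complex poly)) 0 = 0"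
  by simp

lemma assoc1_monic: "monicseq (assoc1 a b)"
proof -
  have "coeff (assoc1 a b n) n = 1 \<and> (\<forall>j>n. coeff (assoc1 a b n) j = 0)" for n
  proof (induction n rule: induct2)
    case 0 then show ?case by simp
  next
    case 1
    have "assoc1 a b 1 = [:-b 1, 1:]" by (simp add: numeral_eq_Suc)
    then show ?case by (simp add: coeff_pCons split: nat.split)
  next
    case (step n)
    have c: "coeff (assoc1 a b (Suc (Suc n))) (Suc j) = coeff (assoc1 a b (Suc n)) j
      - b (Suc (Suc n)) * coeff (assoc1 a b (Suc n)) (Suc j) - a (Suc (Suc n)) * coeff (assoc1 a b n) (Suc j)" for j
      unfolding assoc1_rec by simp
    show ?case
    proof
      show "coeff (assoc1 a b (Suc (Suc n))) (Suc (Suc n)) = 1" using step c[of "Suc n"] by simp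
      show "\<forall>j>Suc (Suc n). coeff (assoc1 a b (Suc (Suc n))) j = 0"
      proof (intro allI impI)
        fix j assume j: "Suc (Suc n) < j"
        then obtain j' where "j = Suc j'" by (cases j) auto
        then show "coeff (assoc1 a b (Suc (Suc n))) j = 0" using step c[of j'] j by simp
      qed
    qed
  qed
  then show ?thesis unfolding monicseq_def by blast
qed

primrec rr :: "(nat \<Rightarrow> complex) \<Rightarrow> nat \<Rightarrow> complex poly" where
  "rr v 0 = [:v 0:]"
| "rr v (Suc k) = pCons (v (Suc k)) (rr v k)"

declare rr.simps(2)[simp del]

lemma coeff_rr: "coeff (rr v k) j = (if j \<le> k then v (k - j) else 0)"
proof (induction k arbitrary: j)
  case 0 then show ?case by (cases j) auto
next
  case (Suc k) then show ?case by (cases j) (auto simp: rr.simps)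
qed

lemma rr_X: "[:0,1:] * rr v k = rr v (Suc k) - [:v (Suc k):]"
  by (subst rr.simps(2), subst pCons_eq_X) simp

lemma lin_fun_monom: "lin_fun m (monom c j) = c * m j"
proof -
  have "\<forall>k\<ge>Suc j. coeff (monom c j) k = 0" by (simp add: coeff_monom)
  from lin_fun_eq[OF this] show ?thesis by (simp add: coeff_monom)
qed

lemma lin_fun_XX: "lin_fun m ([:0,1:] * ([:0,1:] * p)) = lin_fun (\<lambda>k. m (Suc (Suc k))) p"
  by (simp only: lin_fun_X)

lemma monom_Suc_X: "monom (1::complex) (Suc m) = [:0,1:] * monom 1 m"
  by (simp add: monom_Suc)


lemma monom_mult_0: "p * monom (1::complex) 0 = p"
  by (simp add: one_pCons[symmetric] monom_0)

lemma monom_mult_1: "p * monom (1::complex) (Suc 0) = [:0,1:] * p"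
  by (simp add: monom_Suc monom_0 one_pCons[symmetric])

lemma monom_mult_SS: "p * monom (1::complex) (Suc (Suc i)) = [:0,1:] * ([:0,1:] * (p * monom 1 i))"
  by (simp add: monom_Suc)

lemma shift2:
  assumes "coeff T 0 = 0" "coeff T (Suc 0) = (0::complex)"
  shows "\<exists>q. T = [:0,1:] * ([:0,1:] * q)"
proof -
  obtain a T1 where T: "T = pCons a T1" by (cases T)
  obtain c q where T1: "T1 = pCons c q" by (cases T1)
  have "a = 0" "c = 0" using assms unfolding T T1 by simp_all
  then have "T = [:0,1:] * ([:0,1:] * q)" unfolding T T1 by simp
  then show ?thesis by blast
qed


lemma smult_sum_right: "smult (c::complex) (\<Sum>i\<in>S. f i) = (\<Sum>i\<in>S. smult c (f i))"
  by (induction S rule: infinite_finite_induct) (simp_all add: smult_add_right)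

lemma mult_band:
  assumes "\<forall>l>i+da. A i l = 0"
  shows "inf_mat_mult A B i j = (\<Sum>l<i+da+1. A i l * B l j)"
  unfolding inf_mat_mult_def
proof (rule sum.mono_neutral_left)
  show "finite {..<i + da + 1}" by simp
  show "{k. A i k \<noteq> 0} \<subseteq> {..<i + da + 1}"
  proof
    fix k assume "k \<in> {k. A i k \<noteq> 0}"
    then have "\<not> k > i+da" using assms by auto
    then show "k \<in> {..<i + da + 1}" by simp
  qed
  show "\<forall>k\<in>{..<i + da + 1} - {k. A i k \<noteq> 0}. A i k * B k j = 0" by simp
qed

lemma mult_zero:
  assumes a: "\<forall>i l. l > i+da \<longrightarrow> A i l = 0" and b: "\<forall>l k. k > l+db \<longrightarrow> B l k = 0"
    and k: "k > i+da+db"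
  shows "inf_mat_mult A B i k = 0"
proof -
  have "inf_mat_mult A B i k = (\<Sum>l<i+da+1. A i l * B l k)" using a by (intro mult_band) auto
  also have "\<dots> = 0" using b k by (intro sum.neutral) auto
  finally show ?thesis .
qed

lemma mult_poly:
  assumes a: "\<forall>i l. l > i+da \<longrightarrow> A i l = 0" and b: "\<forall>l k. k > l+db \<longrightarrow> B l k = 0"
  shows "(\<Sum>k<i+da+db+1. smult (inf_mat_mult A B i k) (Q k))
     = (\<Sum>l<i+da+1. smult (A i l) (\<Sum>k<l+db+1. smult (B l k) (Q k)))"
proof -
  have "(\<Sum>k<i+da+db+1. smult (inf_mat_mult A B i k) (Q k))
      = (\<Sum>k<i+da+db+1. \<Sum>l<i+da+1. smult (A i l) (smult (B l k) (Q k)))"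
  proof (intro sum.cong refl)
    fix k
    have mb: "inf_mat_mult A B i k = (\<Sum>l<i+da+1. A i l * B l k)" using a by (intro mult_band) auto
    show "smult (inf_mat_mult A B i k) (Q k) = (\<Sum>l<i+da+1. smult (A i l) (smult (B l k) (Q k)))"
      by (simp only: mb smult_sum smult_smult)
  qed
  also have "\<dots> = (\<Sum>l<i+da+1. \<Sum>k<i+da+db+1. smult (A i l) (smult (B l k) (Q k)))"
    by (rule sum.swap)
  also have "\<dots> = (\<Sum>l<i+da+1. smult (A i l) (\<Sum>k<l+db+1. smult (B l k) (Q k)))"
  proof (intro sum.cong refl)
    fix l assume l: "l \<in> {..<i+da+1}"
    have "(\<Sum>k<l+db+1. smult (B l k) (Q k)) = (\<Sum>k<i+da+db+1. smult (B l k) (Q k))"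
    proof (rule sum.mono_neutral_left)
      show "{..<l + db + 1} \<subseteq> {..<i + da + db + 1}" using l by auto
      show "\<forall>k\<in>{..<i + da + db + 1} - {..<l + db + 1}. smult (B l k) (Q k) = 0" using b by auto
    qed simp
    then show "(\<Sum>k<i+da+db+1. smult (A i l) (smult (B l k) (Q k))) = smult (A i l) (\<Sum>k<l+db+1. smult (B l k) (Q k))"
      by (simp only: smult_sum_right)
  qed
  finally show ?thesis .
qed

lemma uniq_basis:
  assumes mq: "monicseq Q"
  shows "(\<Sum>k<N. smult (c k) (Q k)) = (\<Sum>k<N. smult (d k) (Q k)) \<Longrightarrow> k < N \<Longrightarrow> c k = d k"
proof (induction N)
  case 0 then show ?case by simp
next
  case (Suc N)
  have top: "coeff (\<Sum>k<Suc N. smult (e k) (Q k)) N = e N" for e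
  proof -
    have "(\<Sum>k<N. e k * coeff (Q k) N) = 0" using mq unfolding monicseq_def by (intro sum.neutral) auto
    then show ?thesis using mq unfolding monicseq_def by (simp add: coeff_sum)
  qed
  have "coeff (\<Sum>k<Suc N. smult (c k) (Q k)) N = coeff (\<Sum>k<Suc N. smult (d k) (Q k)) N"
    using Suc.prems(1) by (rule arg_cong)
  then have cN: "c N = d N" unfolding top .
  have "(\<Sum>k<N. smult (c k) (Q k)) = (\<Sum>k<N. smult (d k) (Q k))" using Suc.prems(1) cN by simp
  then show ?case using Suc.IH cN Suc.prems(2) less_Suc_eq by auto
qed

lemma sum3: "(\<forall>l<i. f l = 0) \<Longrightarrow> (\<Sum>l<Suc (Suc (Suc i)). f l) = f i + f (Suc i) + f (Suc (Suc i))"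
  by (simp add: sum.neutral add.assoc)

lemma sum2: "(\<Sum>l<Suc (Suc 0). f l) = f 0 + f (Suc 0)"
  by simp



context
  fixes u :: "nat \<Rightarrow> complex" and P Pm :: "nat \<Rightarrow> complex poly" and a b am bm :: "nat \<Rightarrow> complex"
  assumes smop: "is_SMOP u P" and rec: "three_term P a b"
    and smop_inv: "is_SMOP (inv_moments u) Pm" and rec_inv: "three_term Pm am bm"
begin

lemma first_one: assumes "is_SMOP m Q" shows "Q 0 = 1"
proof -
  have d: "degree (Q 0) = 0" "lead_coeff (Q 0) = 1" using assms unfolding is_SMOP_def by blast+
  have "[:coeff (Q 0) 0:] = Q 0" by (rule degree_0_id[OF d(1)])
  moreover have "coeff (Q 0) 0 = 1" using d(2) unfolding d(1) .
  ultimately show ?thesis by (metis one_pCons)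
qed

lemma P0: "P 0 = 1" using first_one[OF smop] .
lemma Pm0: "Pm 0 = 1" using first_one[OF smop_inv] .

lemma P1: "P 1 = [:- b 0, 1:]"
proof -
  have "[:0, 1:] * P 0 = P 1 + smult (b 0) (P 0)" using rec unfolding three_term_def by blast
  then have "P 1 = [:0,1:] - [:b 0:]" using P0 by (simp add: eq_diff_eq)
  then show ?thesis by simp
qed

lemma P1s: "P (Suc 0) = [:- b 0, 1:]" using P1 by simp

lemma Prec: "P (Suc (Suc n)) = [:0,1:] * P (Suc n) - smult (b (Suc n)) (P (Suc n)) - smult (a (Suc n)) (P n)"
proof -
  have h: "[:0,1:] * P (Suc n) = P (Suc (Suc n)) + smult (b (Suc n)) (P (Suc n)) + smult (a (Suc n)) (P n)"
    using rec unfolding three_term_def by blast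
  have "P (Suc (Suc n)) = (P (Suc (Suc n)) + smult (b (Suc n)) (P (Suc n)) + smult (a (Suc n)) (P n))
     - smult (b (Suc n)) (P (Suc n)) - smult (a (Suc n)) (P n)" by simp
  also have "\<dots> = [:0,1:] * P (Suc n) - smult (b (Suc n)) (P (Suc n)) - smult (a (Suc n)) (P n)"
    by (simp only: h)
  finally show ?thesis .
qed

lemma u0: "u 0 \<noteq> 0"
proof -
  have "lin_fun u (P 0 * P 0) \<noteq> 0" using smop unfolding is_SMOP_def by blast
  then show ?thesis by (simp add: P0)
qed

lemma uP: "lin_fun u (P (Suc k)) = 0"
proof -
  have h: "\<forall>n k. n \<noteq> k \<longrightarrow> lin_fun u (P n * P k) = 0" using smop unfolding is_SMOP_def by blast
  show ?thesis using h[rule_format, of "Suc k" 0] P0 by simp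
qed

lemma conv: "(\<Sum>k\<le>n. u k * inv_moments u (n - k)) = (if n = 0 then 1 else 0)"
  by (rule inv_moments_conv[of u, OF u0])

lemma v0: "u 0 * inv_moments u 0 = 1"
  using conv[of 0] by simp

lemma v1: "u 0 * inv_moments u (Suc 0) + u (Suc 0) * inv_moments u 0 = 0"
  using conv[of 1] by (simp add: numeral_eq_Suc)

lemma lin_rr: "lin_fun u (rr (inv_moments u) k) = (if k = 0 then 1 else 0)"
proof -
  have "\<forall>j\<ge>Suc k. coeff (rr (inv_moments u) k) j = 0" by (simp add: coeff_rr)
  from lin_fun_eq[OF this]
  have "lin_fun u (rr (inv_moments u) k) = (\<Sum>j\<le>k. u j * inv_moments u (k - j))"
    by (simp add: coeff_rr lessThan_Suc_atMost mult.commute)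
  then show ?thesis using conv by simp
qed


lemma B1: "Bseq a b (Suc 0) = 1" by simp

lemma C1: "u 0 * lin_fun (\<lambda>k. inv_moments u (Suc (Suc k))) (Bseq a b k * monom 1 m)
   = - lin_fun u (P k * rr (inv_moments u) (Suc m))"
proof (induction k arbitrary: m rule: induct2)
  case 0
  then show ?case by (simp add: P0 lin_rr)
next
  case 1
  have e: "P (Suc 0) * rr (inv_moments u) (Suc m) = rr (inv_moments u) (Suc (Suc m))
      - [:inv_moments u (Suc (Suc m)):] - smult (b 0) (rr (inv_moments u) (Suc m))"
    unfolding P1s by (subst rr_X[symmetric]) (simp add: algebra_simps)
  show ?case
    by (simp only: e One_nat_def B1 mult_1 lin_fun_monom lin_fun_diff lin_fun_smult lin_rr lin_fun_const) simp
next
  case (step n)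
  let ?V = "inv_moments u" and ?W = "\<lambda>k. inv_moments u (Suc (Suc k))"
  have eB: "Bseq a b (Suc (Suc n)) * monom 1 m = Bseq a b (Suc n) * monom 1 (Suc m)
      - smult (b (Suc n)) (Bseq a b (Suc n) * monom 1 m) - smult (a (Suc n)) (Bseq a b n * monom 1 m)"
    by (subst Brec) (simp add: monom_Suc_X algebra_simps)
  have eX: "P (Suc n) * rr ?V (Suc (Suc m)) = P (Suc n) * ([:0,1:] * rr ?V (Suc m)) + smult (?V (Suc (Suc m))) (P (Suc n))"
    by (subst rr_X) (simp add: algebra_simps)
  have eP: "P (Suc (Suc n)) * rr ?V (Suc m) = P (Suc n) * rr ?V (Suc (Suc m))
      - smult (?V (Suc (Suc m))) (P (Suc n)) - smult (b (Suc n)) (P (Suc n) * rr ?V (Suc m))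
      - smult (a (Suc n)) (P n * rr ?V (Suc m))"
    unfolding eX by (subst Prec) (simp add: algebra_simps)
  have "u 0 * lin_fun ?W (Bseq a b (Suc (Suc n)) * monom 1 m)
     = u 0 * lin_fun ?W (Bseq a b (Suc n) * monom 1 (Suc m))
       - b (Suc n) * (u 0 * lin_fun ?W (Bseq a b (Suc n) * monom 1 m))
       - a (Suc n) * (u 0 * lin_fun ?W (Bseq a b n * monom 1 m))"
    unfolding eB lin_fun_diff lin_fun_smult by (simp add: algebra_simps)
  also have "\<dots> = - lin_fun u (P (Suc n) * rr ?V (Suc (Suc m)))
       + b (Suc n) * lin_fun u (P (Suc n) * rr ?V (Suc m))
       + a (Suc n) * lin_fun u (P n * rr ?V (Suc m))"
    using step(1)[of m] step(2)[of m] step(2)[of "Suc m"] by simp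
  also have "\<dots> = - lin_fun u (P (Suc (Suc n)) * rr ?V (Suc m))"
    unfolding eP lin_fun_diff lin_fun_smult by (simp add: uP algebra_simps)
  finally show ?case .
qed

lemma lin_fun_lin: "lin_fun m [:c, d:] = c * m 0 + d * m (Suc 0)"
proof -
  have "\<forall>k\<ge>Suc (Suc 0). coeff [:c, d:] k = 0" by (auto simp: coeff_pCons split: nat.split)
  from lin_fun_eq[OF this] show ?thesis by (simp add: numeral_eq_Suc)
qed

lemma C3: "u 0 * lin_fun (inv_moments u) ([:0,1:] * Bseq a b k)
   = coeff (P k) 0 - inv_moments u 0 * lin_fun u (P k)"
proof (induction k rule: induct2)
  case 0
  then show ?case using v0 by (simp add: P0 mult.commute)
next
  case 1
  have l: "lin_fun (inv_moments u) ([:0,1:] * Bseq a b 1) = inv_moments u (Suc 0)"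
    by (simp only: One_nat_def B1 mult_1_right lin_fun_lin) simp
  have "coeff (P 1) 0 - inv_moments u 0 * lin_fun u (P 1)
      = - b 0 - inv_moments u 0 * (- b 0 * u 0 + u (Suc 0))"
    unfolding P1 lin_fun_lin by simp
  also have "\<dots> = - b 0 + b 0 * (u 0 * inv_moments u 0) - u (Suc 0) * inv_moments u 0"
    by (simp add: algebra_simps)
  also have "\<dots> = - (u (Suc 0) * inv_moments u 0)" unfolding v0 by simp
  also have "\<dots> = u 0 * inv_moments u (Suc 0)" using v1 by (simp add: add_eq_0_iff)
  finally have "u 0 * inv_moments u (Suc 0) = coeff (P 1) 0 - inv_moments u 0 * lin_fun u (P 1)" by simp
  then show ?case using l by simp
next
  case (step n)
  let ?V = "inv_moments u" and ?W = "\<lambda>k. inv_moments u (Suc (Suc k))"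
  have c1: "u 0 * lin_fun ?W (Bseq a b (Suc n)) = - lin_fun u (P (Suc n) * rr ?V (Suc 0))"
    using C1[of "Suc n" 0] by simp
  have r1: "rr ?V (Suc 0) = [:?V (Suc 0), ?V 0:]" by (simp add: rr.simps)
  have e1: "P (Suc n) * [:?V (Suc 0), ?V 0:] = smult (?V (Suc 0)) (P (Suc n)) + smult (?V 0) ([:0,1:] * P (Suc n))"
    by (simp add: algebra_simps)
  have eB: "[:0,1:] * Bseq a b (Suc (Suc n)) = [:0,1:] * ([:0,1:] * Bseq a b (Suc n))
     - smult (b (Suc n)) ([:0,1:] * Bseq a b (Suc n)) - smult (a (Suc n)) ([:0,1:] * Bseq a b n)"
    by (subst Brec) (simp add: algebra_simps)
  have "u 0 * lin_fun ?V ([:0,1:] * Bseq a b (Suc (Suc n)))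
     = u 0 * lin_fun ?W (Bseq a b (Suc n))
       - b (Suc n) * (u 0 * lin_fun ?V ([:0,1:] * Bseq a b (Suc n)))
       - a (Suc n) * (u 0 * lin_fun ?V ([:0,1:] * Bseq a b n))"
    unfolding eB lin_fun_diff lin_fun_smult lin_fun_XX by (simp add: algebra_simps)
  also have "\<dots> = - ?V 0 * lin_fun u ([:0,1:] * P (Suc n))
       - b (Suc n) * (coeff (P (Suc n)) 0) - a (Suc n) * (coeff (P n) 0 - ?V 0 * lin_fun u (P n))"
    unfolding c1 r1 e1 lin_fun_add lin_fun_smult step(1) step(2) by (simp add: uP)
  also have "\<dots> = coeff (P (Suc (Suc n))) 0 - ?V 0 * lin_fun u (P (Suc (Suc n)))"
    by (subst (1 2) Prec, simp only: lin_fun_diff lin_fun_smult) (simp add: uP algebra_simps)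
  finally show ?case .
qed

lemma C2: "u 0 * lin_fun (inv_moments u) (Bseq a b k) = coeff (P k) (Suc 0)"
proof (induction k rule: induct2)
  case 0
  then show ?case by (simp add: P0)
next
  case 1
  then show ?case using v0 P1 by simp
next
  case (step n)
  let ?V = "inv_moments u"
  have "u 0 * lin_fun ?V (Bseq a b (Suc (Suc n)))
     = u 0 * lin_fun ?V ([:0,1:] * Bseq a b (Suc n))
       - b (Suc n) * (u 0 * lin_fun ?V (Bseq a b (Suc n)))
       - a (Suc n) * (u 0 * lin_fun ?V (Bseq a b n))"
    by (subst Brec, simp only: lin_fun_diff lin_fun_smult) (simp add: algebra_simps)
  also have "\<dots> = coeff (P (Suc n)) 0 - b (Suc n) * coeff (P (Suc n)) (Suc 0) - a (Suc n) * coeff (P n) (Suc 0)"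
    unfolding C3 step(1) step(2) by (simp add: uP)
  also have "\<dots> = coeff (P (Suc (Suc n))) (Suc 0)"
    by (subst Prec) simp
  finally show ?case .
qed


lemma V0nz: "inv_moments u 0 \<noteq> 0" using v0 by auto

lemma wo: "j < n \<Longrightarrow> lin_fun (\<lambda>k. inv_moments u (Suc (Suc k))) (assoc1 a b n * monom 1 j) = 0"
proof -
  assume j: "j < n"
  have "\<forall>i\<ge>Suc n. coeff (rr (inv_moments u) (Suc j)) i = 0" using j by (simp add: coeff_rr)
  from orth_below[OF smop this] C1[of "Suc n" j]
  have "u 0 * lin_fun (\<lambda>k. inv_moments u (Suc (Suc k))) (assoc1 a b n * monom 1 j) = 0" by simp
  then show ?thesis using u0 by simp
qed

lemma wn: "lin_fun (\<lambda>k. inv_moments u (Suc (Suc k))) (assoc1 a b n * monom 1 n) \<noteq> 0"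
proof -
  have "\<forall>i>Suc n. coeff (rr (inv_moments u) (Suc n)) i = 0" by (simp add: coeff_rr)
  from orth_coeff[OF smop this]
  have "lin_fun u (P (Suc n) * rr (inv_moments u) (Suc n)) = inv_moments u 0 * lin_fun u (P (Suc n) * P (Suc n))"
    by (simp add: coeff_rr)
  moreover have "lin_fun u (P (Suc n) * P (Suc n)) \<noteq> 0" using smop unfolding is_SMOP_def by blast
  ultimately have "lin_fun u (P (Suc n) * rr (inv_moments u) (Suc n)) \<noteq> 0" using V0nz by simp
  then show ?thesis using C1[of "Suc n" n] by auto
qed

lemma smop_w: "is_SMOP (\<lambda>k. inv_moments u (Suc (Suc k))) (assoc1 a b)"
  by (rule SMOP_from_monom[OF assoc1_monic]) (use wo wn in auto)

lemma vA: "u 0 * lin_fun (inv_moments u) (assoc1 a b n) = coeff (P (Suc n)) 1"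
  using C2[of "Suc n"] by simp

lemma vXA: "u 0 * lin_fun (inv_moments u) ([:0,1:] * assoc1 a b n) = coeff (P (Suc n)) 0"
  using C3[of "Suc n"] by (simp add: uP)


lemma T1: "W0 (P (Suc (Suc k))) (P (Suc k)) \<noteq> 0"
proof
  let ?V = "inv_moments u" and ?W = "\<lambda>k. inv_moments u (Suc (Suc k))"
  assume h: "W0 (P (Suc (Suc k))) (P (Suc k)) = 0"
  have "coeff (P (Suc (Suc k))) 0 * coeff (P (Suc k)) 1 - coeff (P (Suc (Suc k))) 1 * coeff (P (Suc k)) 0 = 0"
    using h by (simp add: W0_coeff)
  from dep2[OF this] obtain s t where st: "\<not> (s = 0 \<and> t = 0)"
    "s * coeff (P (Suc (Suc k))) 0 + t * coeff (P (Suc k)) 0 = 0"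
    "s * coeff (P (Suc (Suc k))) 1 + t * coeff (P (Suc k)) 1 = 0" by blast
  define q where "q = smult s (assoc1 a b (Suc k)) + smult t (assoc1 a b k)"
  have mA: "monicseq (assoc1 a b)" by (rule assoc1_monic)
  have "q = 0"
  proof (rule ND[OF smop_inv, of "Suc (Suc k)"])
    show "\<forall>j\<ge>Suc (Suc k). coeff q j = 0" using mA unfolding monicseq_def q_def by auto
    show "\<forall>j<Suc (Suc k). lin_fun ?V (q * monom 1 j) = 0"
    proof (intro allI impI)
      fix j assume j: "j < Suc (Suc k)"
      consider "j = 0" | "j = Suc 0" | i where "j = Suc (Suc i)" "i < k"
        using j by (metis less_Suc_eq_0_disj Suc_less_SucD)
      then show "lin_fun ?V (q * monom 1 j) = 0"
      proof cases
        case 1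
        have "u 0 * lin_fun ?V q = s * (u 0 * lin_fun ?V (assoc1 a b (Suc k))) + t * (u 0 * lin_fun ?V (assoc1 a b k))"
          unfolding q_def lin_fun_add lin_fun_smult by (simp add: algebra_simps)
        also have "\<dots> = 0" unfolding vA using st(3) .
        finally show ?thesis using 1 u0 by (simp add: monom_mult_0)
      next
        case 2
        have "u 0 * lin_fun ?V ([:0,1:] * q) = s * (u 0 * lin_fun ?V ([:0,1:] * assoc1 a b (Suc k))) + t * (u 0 * lin_fun ?V ([:0,1:] * assoc1 a b k))"
          unfolding q_def distrib_left mult_smult_right lin_fun_add lin_fun_smult by (simp add: algebra_simps)
        also have "\<dots> = 0" unfolding vXA using st(2) .
        finally show ?thesis using 2 u0 by (simp add: monom_mult_1)
      next
        case 3
        have "lin_fun ?V (q * monom 1 j) = lin_fun ?W (q * monom 1 i)"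
          unfolding 3 monom_mult_SS lin_fun_XX ..
        also have "\<dots> = s * lin_fun ?W (assoc1 a b (Suc k) * monom 1 i) + t * lin_fun ?W (assoc1 a b k * monom 1 i)"
          unfolding q_def distrib_right mult_smult_left lin_fun_add lin_fun_smult ..
        also have "\<dots> = 0" using wo[of i "Suc k"] wo[of i k] 3 by simp
        finally show ?thesis .
      qed
    qed
  qed
  have "coeff q (Suc k) = s" using mA unfolding monicseq_def q_def by simp
  then have s0: "s = 0" using \<open>q = 0\<close> by simp
  have "coeff q k = s * coeff (assoc1 a b (Suc k)) k + t" using mA unfolding monicseq_def q_def by simp
  then have "t = 0" using \<open>q = 0\<close> s0 by simp
  then show False using st(1) s0 by simp
qed

lemma T2: "W0 (Pm n) (Pm (Suc n)) \<noteq> 0"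
proof
  let ?V = "inv_moments u" and ?W = "\<lambda>k. inv_moments u (Suc (Suc k))"
  assume h: "W0 (Pm n) (Pm (Suc n)) = 0"
  have "coeff (Pm n) 0 * coeff (Pm (Suc n)) 1 - coeff (Pm n) 1 * coeff (Pm (Suc n)) 0 = 0"
    using h by (simp add: W0_coeff)
  from dep2[OF this] obtain s t where st: "\<not> (s = 0 \<and> t = 0)"
    "s * coeff (Pm n) 0 + t * coeff (Pm (Suc n)) 0 = 0"
    "s * coeff (Pm n) 1 + t * coeff (Pm (Suc n)) 1 = 0" by blast
  define T where "T = smult s (Pm n) + smult t (Pm (Suc n))"
  have "coeff T 0 = 0" "coeff T (Suc 0) = 0" using st unfolding T_def by simp_all
  from shift2[OF this] obtain q where q: "T = [:0,1:] * ([:0,1:] * q)" by blast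
  have cq: "coeff q i = coeff T (Suc (Suc i))" for i unfolding q by simp
  have mP: "monicseq Pm" by (rule SMOP_monicseq[OF smop_inv])
  have "q = 0"
  proof (rule ND[OF smop_w, of n])
    show "\<forall>j\<ge>n. coeff q j = 0" using mP unfolding monicseq_def cq T_def by simp
    show "\<forall>j<n. lin_fun ?W (q * monom 1 j) = 0"
    proof (intro allI impI)
      fix j assume j: "j < n"
      have o: "lin_fun ?V (Pm m * monom 1 j) = 0" if "n \<le> m" for m
        using j that by (intro orth_below[OF smop_inv]) (simp add: coeff_monom)
      have "lin_fun ?W (q * monom 1 j) = lin_fun ?V ([:0,1:] * ([:0,1:] * (q * monom 1 j)))"
        unfolding lin_fun_XX ..
      also have "[:0,1:] * ([:0,1:] * (q * monom 1 j)) = T * monom 1 j" unfolding q by (simp add: algebra_simps)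
      also have "lin_fun ?V (T * monom 1 j) = s * lin_fun ?V (Pm n * monom 1 j) + t * lin_fun ?V (Pm (Suc n) * monom 1 j)"
        unfolding T_def distrib_right mult_smult_left lin_fun_add lin_fun_smult ..
      also have "\<dots> = 0" using o[of n] o[of "Suc n"] by simp
      finally show "lin_fun ?W (q * monom 1 j) = 0" .
    qed
  qed
  then have T0: "T = 0" unfolding q by simp
  have "coeff T (Suc n) = t" using mP unfolding monicseq_def T_def by simp
  then have t0: "t = 0" using T0 by simp
  have "coeff T n = s + t * coeff (Pm (Suc n)) n" using mP unfolding monicseq_def T_def by simp
  then have "s = 0" using T0 t0 by simp
  then show False using st(1) t0 by simp
qed


lemma vPm: "lin_fun (inv_moments u) (Pm (Suc k)) = 0"
proof -
  have h: "\<forall>n k. n \<noteq> k \<longrightarrow> lin_fun (inv_moments u) (Pm n * Pm k) = 0"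
    using smop_inv unfolding is_SMOP_def by blast
  show ?thesis using h[rule_format, of "Suc k" 0] Pm0 by simp
qed

lemma vXPm: "lin_fun (inv_moments u) ([:0,1:] * Pm (Suc (Suc k))) = 0"
proof -
  have "lin_fun (inv_moments u) (Pm (Suc (Suc k)) * [:0,1:]) = 0"
    by (rule orth_below[OF smop_inv]) (simp add: coeff_pCons split: nat.split)
  then show ?thesis by (simp add: mult.commute)
qed

lemma T3: "Pm 1 = assoc1 a b 1 + smult (alpha1 P b 1) (assoc1 a b 0)"
proof -
  let ?V = "inv_moments u"
  have A1: "assoc1 a b (Suc 0) = [:- b 1, 1:]" by simp
  have mP: "monicseq Pm" by (rule SMOP_monicseq[OF smop_inv])
  define c where "c = coeff (Pm (Suc 0)) 0 - coeff (assoc1 a b (Suc 0)) 0"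
  have R: "Pm (Suc 0) = assoc1 a b (Suc 0) + [:c:]"
  proof (rule poly_eqI)
    fix j show "coeff (Pm (Suc 0)) j = coeff (assoc1 a b (Suc 0) + [:c:]) j"
    proof (cases j)
      case 0 then show ?thesis by (simp add: c_def)
    next
      case (Suc i)
      then show ?thesis using mP unfolding monicseq_def A1
        by (cases i) (auto simp: coeff_pCons)
    qed
  qed
  have P2: "coeff (P (Suc (Suc 0))) 1 = - b 0 - b 1"
    by (subst Prec) (simp add: P1s P0)
  have "0 = u 0 * lin_fun ?V (Pm (Suc 0))" using vPm[of 0] by simp
  also have "\<dots> = u 0 * lin_fun ?V (assoc1 a b (Suc 0)) + c * (u 0 * ?V 0)"
    unfolding R lin_fun_add lin_fun_const by (simp add: algebra_simps)
  also have "\<dots> = - b 0 - b 1 + c" unfolding vA P2 v0 by simp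
  finally have "c = b 0 + b 1" by (simp add: algebra_simps)
  then show ?thesis using R by (simp add: alpha1_def)
qed

lemma T4: "Pm (Suc (Suc k)) = assoc1 a b (Suc (Suc k)) + smult (alpha1 P b (Suc (Suc k))) (assoc1 a b (Suc k))
   + smult (alpha2 P (Suc (Suc k))) (assoc1 a b k)"
proof -
  let ?V = "inv_moments u" and ?W = "\<lambda>k. inv_moments u (Suc (Suc k))"
  have mP: "monicseq Pm" by (rule SMOP_monicseq[OF smop_inv])
  have mA: "monicseq (assoc1 a b)" by (rule assoc1_monic)
  define R where "R = Pm (Suc (Suc k)) - assoc1 a b (Suc (Suc k))"
  have "\<exists>c1 c0. R = smult c1 (assoc1 a b (Suc k)) + smult c0 (assoc1 a b k)"
  proof (rule expand3[OF smop_w])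
    show "\<forall>j>Suc k. coeff R j = 0"
    proof (intro allI impI)
      fix j assume "Suc k < j"
      then consider "j = Suc (Suc k)" | "j > Suc (Suc k)" by linarith
      then show "coeff R j = 0" using mP mA unfolding monicseq_def R_def by cases auto
    qed
    show "\<forall>j<k. lin_fun ?W (R * monom 1 j) = 0"
    proof (intro allI impI)
      fix j assume j: "j < k"
      have "lin_fun ?W (Pm (Suc (Suc k)) * monom 1 j) = lin_fun ?V (Pm (Suc (Suc k)) * monom 1 (Suc (Suc j)))"
        unfolding monom_mult_SS lin_fun_XX ..
      also have "\<dots> = 0" using j by (intro orth_below[OF smop_inv]) (simp add: coeff_monom)
      finally show "lin_fun ?W (R * monom 1 j) = 0"
        unfolding R_def left_diff_distrib lin_fun_diff using wo[of j "Suc (Suc k)"] j by simp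
    qed
  qed
  then obtain c1 c0 where c: "R = smult c1 (assoc1 a b (Suc k)) + smult c0 (assoc1 a b k)" by blast
  then have Pe: "Pm (Suc (Suc k)) = assoc1 a b (Suc (Suc k)) + smult c1 (assoc1 a b (Suc k)) + smult c0 (assoc1 a b k)"
    unfolding R_def by (simp add: algebra_simps)
  define x0 where "x0 = coeff (P (Suc k)) 0"
  define y0 where "y0 = coeff (P (Suc k)) 1"
  define x1 where "x1 = coeff (P (Suc (Suc k))) 0"
  define y1 where "y1 = coeff (P (Suc (Suc k))) 1"
  define z0 where "z0 = coeff (P (Suc (Suc (Suc k)))) 0"
  define z1 where "z1 = coeff (P (Suc (Suc (Suc k)))) 1"
  have "0 = u 0 * lin_fun ?V (Pm (Suc (Suc k)))" using vPm[of "Suc k"] by simp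
  also have "\<dots> = u 0 * lin_fun ?V (assoc1 a b (Suc (Suc k))) + c1 * (u 0 * lin_fun ?V (assoc1 a b (Suc k)))
     + c0 * (u 0 * lin_fun ?V (assoc1 a b k))"
    unfolding Pe lin_fun_add lin_fun_smult by (simp add: algebra_simps)
  also have "\<dots> = z1 + c1 * y1 + c0 * y0" unfolding vA z1_def y1_def y0_def ..
  finally have e1: "z1 + c1 * y1 + c0 * y0 = 0" by simp
  have "0 = u 0 * lin_fun ?V ([:0,1:] * Pm (Suc (Suc k)))" using vXPm[of k] by simp
  also have "\<dots> = u 0 * lin_fun ?V ([:0,1:] * assoc1 a b (Suc (Suc k))) + c1 * (u 0 * lin_fun ?V ([:0,1:] * assoc1 a b (Suc k)))
     + c0 * (u 0 * lin_fun ?V ([:0,1:] * assoc1 a b k))"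
    unfolding Pe distrib_left mult_smult_right lin_fun_add lin_fun_smult by (simp add: algebra_simps)
  also have "\<dots> = z0 + c1 * x1 + c0 * x0" unfolding vXA z0_def x1_def x0_def ..
  finally have e0: "z0 + c1 * x1 + c0 * x0 = 0" by simp
  have D: "x1 * y0 - y1 * x0 \<noteq> 0" using T1[of k] unfolding W0_coeff x1_def y0_def y1_def x0_def .
  have "c1 * (x1 * y0 - y1 * x0) + (z0 * y0 - z1 * x0) = y0 * (z0 + c1 * x1 + c0 * x0) - x0 * (z1 + c1 * y1 + c0 * y0)"
    by (simp add: algebra_simps)
  then have "c1 * (x1 * y0 - y1 * x0) + (z0 * y0 - z1 * x0) = 0" unfolding e0 e1 by simp
  then have c1D: "c1 * (x1 * y0 - y1 * x0) = - (z0 * y0 - z1 * x0)" by (simp only: eq_neg_iff_add_eq_0)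
  have "c0 * (x1 * y0 - y1 * x0) - (z0 * y1 - z1 * x1) = x1 * (z1 + c1 * y1 + c0 * y0) - y1 * (z0 + c1 * x1 + c0 * x0)"
    by (simp add: algebra_simps)
  then have c0D: "c0 * (x1 * y0 - y1 * x0) = z0 * y1 - z1 * x1" unfolding e0 e1 by simp
  have al1: "alpha1 P b (Suc (Suc k)) = - (z0 * y0 - z1 * x0) / (x1 * y0 - y1 * x0)"
    unfolding alpha1_def W0_coeff x0_def y0_def x1_def y1_def z0_def z1_def by simp
  have al2: "alpha2 P (Suc (Suc k)) = (z0 * y1 - z1 * x1) / (x1 * y0 - y1 * x0)"
    unfolding alpha2_def W0_coeff x0_def y0_def x1_def y1_def z0_def z1_def by simp
  have a1: "c1 = alpha1 P b (Suc (Suc k))"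
    unfolding al1 c1D[symmetric] using D by simp
  have a2: "c0 = alpha2 P (Suc (Suc k))"
    unfolding al2 c0D[symmetric] using D by simp
  show ?thesis using Pe a1 a2 by simp
qed

lemma T5: "[:0,0,1:] * assoc1 a b n = Pm (n + 2) + smult (beta1 Pm n) (Pm (n + 1)) + smult (beta0 Pm n) (Pm n)"
proof -
  let ?V = "inv_moments u" and ?W = "\<lambda>k. inv_moments u (Suc (Suc k))"
  have mP: "monicseq Pm" by (rule SMOP_monicseq[OF smop_inv])
  have mA: "monicseq (assoc1 a b)" by (rule assoc1_monic)
  define R where "R = [:0,1:] * ([:0,1:] * assoc1 a b n) - Pm (Suc (Suc n))"
  have "\<exists>c1 c0. R = smult c1 (Pm (Suc n)) + smult c0 (Pm n)"
  proof (rule expand3[OF smop_inv])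
    show "\<forall>j>Suc n. coeff R j = 0"
    proof (intro allI impI)
      fix j assume j: "Suc n < j"
      define i where "i = j - 2"
      have i: "j = Suc (Suc i)" "n \<le> i" using j unfolding i_def by arith+
      then consider "i = n" | "i > n" by linarith
      then show "coeff R j = 0" using mP mA i unfolding monicseq_def R_def by cases auto
    qed
    show "\<forall>j<n. lin_fun ?V (R * monom 1 j) = 0"
    proof (intro allI impI)
      fix j assume j: "j < n"
      have "lin_fun ?V ([:0,1:] * ([:0,1:] * assoc1 a b n) * monom 1 j) = lin_fun ?W (assoc1 a b n * monom 1 j)"
        by (simp only: mult.assoc lin_fun_XX)
      also have "\<dots> = 0" using wo[OF j] .
      finally have h1: "lin_fun ?V ([:0,1:] * ([:0,1:] * assoc1 a b n) * monom 1 j) = 0" .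
      have h2: "lin_fun ?V (Pm (Suc (Suc n)) * monom 1 j) = 0"
        using j by (intro orth_below[OF smop_inv]) (simp add: coeff_monom)
      show "lin_fun ?V (R * monom 1 j) = 0"
        unfolding R_def left_diff_distrib lin_fun_diff h1 h2 by simp
    qed
  qed
  then obtain c1 c0 where c: "R = smult c1 (Pm (Suc n)) + smult c0 (Pm n)" by blast
  then have Pe: "[:0,1:] * ([:0,1:] * assoc1 a b n) = Pm (Suc (Suc n)) + smult c1 (Pm (Suc n)) + smult c0 (Pm n)"
    unfolding R_def by (simp add: algebra_simps)
  define x0 where "x0 = coeff (Pm n) 0"
  define y0 where "y0 = coeff (Pm n) 1"
  define x1 where "x1 = coeff (Pm (Suc n)) 0"
  define y1 where "y1 = coeff (Pm (Suc n)) 1"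
  define z0 where "z0 = coeff (Pm (Suc (Suc n))) 0"
  define z1 where "z1 = coeff (Pm (Suc (Suc n))) 1"
  have "coeff ([:0,1:] * ([:0,1:] * assoc1 a b n)) 0 = 0" by simp
  then have e0: "z0 + c1 * x1 + c0 * x0 = 0" unfolding Pe z0_def x1_def x0_def by simp
  have "coeff ([:0,1:] * ([:0,1:] * assoc1 a b n)) 1 = 0" by simp
  then have e1: "z1 + c1 * y1 + c0 * y0 = 0" unfolding Pe z1_def y1_def y0_def by simp
  have D: "x0 * y1 - y0 * x1 \<noteq> 0" using T2[of n] unfolding W0_coeff x1_def y0_def y1_def x0_def .
  have "c0 * (x0 * y1 - y0 * x1) - (x1 * z1 - y1 * z0) = y1 * (z0 + c1 * x1 + c0 * x0) - x1 * (z1 + c1 * y1 + c0 * y0)"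
    by (simp add: algebra_simps)
  then have c0D: "c0 * (x0 * y1 - y0 * x1) = x1 * z1 - y1 * z0" unfolding e0 e1 by simp
  have "c1 * (x0 * y1 - y0 * x1) + (x0 * z1 - y0 * z0) = x0 * (z1 + c1 * y1 + c0 * y0) - y0 * (z0 + c1 * x1 + c0 * x0)"
    by (simp add: algebra_simps)
  then have "c1 * (x0 * y1 - y0 * x1) + (x0 * z1 - y0 * z0) = 0" unfolding e0 e1 by simp
  then have c1D: "c1 * (x0 * y1 - y0 * x1) = - (x0 * z1 - y0 * z0)" by (simp only: eq_neg_iff_add_eq_0)
  have be0: "beta0 Pm n = (x1 * z1 - y1 * z0) / (x0 * y1 - y0 * x1)"
    unfolding beta0_def W0_coeff x0_def y0_def x1_def y1_def z0_def z1_def by simp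
  have be1: "beta1 Pm n = - (x0 * z1 - y0 * z0) / (x0 * y1 - y0 * x1)"
    unfolding beta1_def W0_coeff x0_def y0_def x1_def y1_def z0_def z1_def by simp
  have b0: "c0 = beta0 Pm n"
    unfolding be0 c0D[symmetric] using D by simp
  have b1: "c1 = beta1 Pm n"
    unfolding be1 c1D[symmetric] using D by simp
  show ?thesis using Pe b0 b1 by (simp add: XX_eq)
qed


lemma bandJ: "\<forall>i l. l > i+1 \<longrightarrow> monic_jacobi aa bb i l = 0"
  by (auto simp: monic_jacobi_def)

lemma bandU: "\<forall>i l. l > i+2 \<longrightarrow> Umat Pm i l = 0"
  by (auto simp: Umat_def)

lemma bandL: "\<forall>i l. l > i+0 \<longrightarrow> Lmat P b i l = 0"
  by (auto simp: Lmat_def)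

lemma RJ1: "(\<Sum>l<Suc (Suc i). smult (monic_jacobi (\<lambda>k. a (Suc k)) (\<lambda>k. b (Suc k)) i l) (assoc1 a b l))
   = [:0,1:] * assoc1 a b i"
proof (cases i)
  case 0
  then show ?thesis by (simp add: monic_jacobi_def)
next
  case (Suc k)
  have "(\<Sum>l<Suc (Suc (Suc k)). smult (monic_jacobi (\<lambda>k. a (Suc k)) (\<lambda>k. b (Suc k)) (Suc k) l) (assoc1 a b l))
     = smult (a (Suc (Suc k))) (assoc1 a b k) + smult (b (Suc (Suc k))) (assoc1 a b (Suc k)) + assoc1 a b (Suc (Suc k))"
    by (subst sum3) (auto simp: monic_jacobi_def)
  also have "\<dots> = [:0,1:] * assoc1 a b (Suc k)"
    by (simp only: assoc1_rec) (simp add: algebra_simps)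
  finally show ?thesis using Suc by simp
qed

lemma RJm: "(\<Sum>l<Suc (Suc i). smult (monic_jacobi am bm i l) (Pm l)) = [:0,1:] * Pm i"
proof (cases i)
  case 0
  have "[:0, 1:] * Pm 0 = Pm 1 + smult (bm 0) (Pm 0)" using rec_inv unfolding three_term_def by blast
  then show ?thesis using 0 by (simp add: monic_jacobi_def)
next
  case (Suc k)
  have h: "[:0,1:] * Pm (Suc k) = Pm (Suc (Suc k)) + smult (bm (Suc k)) (Pm (Suc k)) + smult (am (Suc k)) (Pm k)"
    using rec_inv unfolding three_term_def by blast
  have "(\<Sum>l<Suc (Suc (Suc k)). smult (monic_jacobi am bm (Suc k) l) (Pm l))
     = smult (am (Suc k)) (Pm k) + smult (bm (Suc k)) (Pm (Suc k)) + Pm (Suc (Suc k))"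
    by (subst sum3) (auto simp: monic_jacobi_def)
  also have "\<dots> = [:0,1:] * Pm (Suc k)" unfolding h by (simp add: algebra_simps)
  finally show ?thesis using Suc by simp
qed

lemma RL: "(\<Sum>l<Suc i. smult (Lmat P b i l) (assoc1 a b l)) = Pm i"
proof -
  consider "i = 0" | "i = Suc 0" | k where "i = Suc (Suc k)" by (metis not0_implies_Suc)
  then show ?thesis
  proof cases
    case 1 then show ?thesis by (simp add: Lmat_def Pm0)
  next
    case 2
    have "Pm (Suc 0) = assoc1 a b (Suc 0) + smult (alpha1 P b (Suc 0)) (assoc1 a b 0)"
      using T3 by simp
    then show ?thesis using 2 by (simp add: Lmat_def)
  next
    case 3
    have "(\<Sum>l<Suc (Suc (Suc k)). smult (Lmat P b (Suc (Suc k)) l) (assoc1 a b l))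
     = smult (alpha2 P (Suc (Suc k))) (assoc1 a b k) + smult (alpha1 P b (Suc (Suc k))) (assoc1 a b (Suc k)) + assoc1 a b (Suc (Suc k))"
      by (subst sum3) (auto simp: Lmat_def)
    also have "\<dots> = Pm (Suc (Suc k))" unfolding T4 by (simp add: algebra_simps)
    finally show ?thesis using 3 by simp
  qed
qed

lemma RU: "(\<Sum>l<Suc (Suc (Suc i)). smult (Umat Pm i l) (Pm l)) = [:0,1:] * ([:0,1:] * assoc1 a b i)"
proof -
  have "(\<Sum>l<Suc (Suc (Suc i)). smult (Umat Pm i l) (Pm l))
     = smult (beta0 Pm i) (Pm i) + smult (beta1 Pm i) (Pm (Suc i)) + Pm (Suc (Suc i))"
    by (subst sum3) (auto simp: Umat_def)
  also have "\<dots> = [:0,1:] * ([:0,1:] * assoc1 a b i)" using T5[of i] by (simp add: XX_eq algebra_simps)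
  finally show ?thesis .
qed


lemma MJ: "inf_mat_mult (monic_jacobi (\<lambda>k. a (Suc k)) (\<lambda>k. b (Suc k)))
                   (monic_jacobi (\<lambda>k. a (Suc k)) (\<lambda>k. b (Suc k)))
        = inf_mat_mult (Umat Pm) (Lmat P b)"
proof (intro ext)
  fix i j
  let ?J = "monic_jacobi (\<lambda>k. a (Suc k)) (\<lambda>k. b (Suc k))"
  let ?A = "assoc1 a b"
  show "inf_mat_mult ?J ?J i j = inf_mat_mult (Umat Pm) (Lmat P b) i j"
  proof (cases "j < Suc (Suc (Suc i))")
    case True
    have s1: "(\<Sum>k<Suc (Suc (Suc i)). smult (inf_mat_mult ?J ?J i k) (?A k)) = [:0,1:] * ([:0,1:] * ?A i)"
    proof -
      have "(\<Sum>k<i+1+1+1. smult (inf_mat_mult ?J ?J i k) (?A k))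
          = (\<Sum>l<i+1+1. smult (?J i l) (\<Sum>k<l+1+1. smult (?J l k) (?A k)))"
        by (rule mult_poly[OF bandJ bandJ])
      also have "\<dots> = (\<Sum>l<Suc (Suc i). smult (?J i l) ([:0,1:] * ?A l))"
        by (simp only: Suc_eq_plus1[symmetric] RJ1)
      also have "\<dots> = [:0,1:] * (\<Sum>l<Suc (Suc i). smult (?J i l) (?A l))"
        by (simp only: sum_distrib_left mult_smult_right)
      also have "\<dots> = [:0,1:] * ([:0,1:] * ?A i)" by (simp only: RJ1)
      finally show ?thesis by (simp only: Suc_eq_plus1[symmetric])
    qed
    have s2: "(\<Sum>k<Suc (Suc (Suc i)). smult (inf_mat_mult (Umat Pm) (Lmat P b) i k) (?A k)) = [:0,1:] * ([:0,1:] * ?A i)"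
    proof -
      have "(\<Sum>k<i+2+0+1. smult (inf_mat_mult (Umat Pm) (Lmat P b) i k) (?A k))
          = (\<Sum>l<i+2+1. smult (Umat Pm i l) (\<Sum>k<l+0+1. smult (Lmat P b l k) (?A k)))"
        by (rule mult_poly[OF bandU bandL])
      also have "\<dots> = (\<Sum>l<Suc (Suc (Suc i)). smult (Umat Pm i l) (Pm l))"
        by (simp only: add_0_right Suc_eq_plus1[symmetric] RL numeral_2_eq_2 add_Suc_right)
      also have "\<dots> = [:0,1:] * ([:0,1:] * ?A i)" by (rule RU)
      finally show ?thesis by (simp only: add_0_right Suc_eq_plus1[symmetric] numeral_2_eq_2 add_Suc_right)
    qed
    show ?thesis
      by (rule uniq_basis[OF assoc1_monic[of a b] _ True]) (simp only: s1 s2)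
  next
    case False
    then have "j > i+1+1" "j > i+2+0" by auto
    then show ?thesis using mult_zero[OF bandJ bandJ] mult_zero[OF bandU bandL] by simp
  qed
qed

lemma MLU: "inf_mat_mult (monic_jacobi am bm) (monic_jacobi am bm) = inf_mat_mult (Lmat P b) (Umat Pm)"
proof (intro ext)
  fix i j
  let ?J = "monic_jacobi am bm"
  let ?A = "assoc1 a b"
  have mP: "monicseq Pm" by (rule SMOP_monicseq[OF smop_inv])
  show "inf_mat_mult ?J ?J i j = inf_mat_mult (Lmat P b) (Umat Pm) i j"
  proof (cases "j < Suc (Suc (Suc i))")
    case True
    have s1: "(\<Sum>k<Suc (Suc (Suc i)). smult (inf_mat_mult ?J ?J i k) (Pm k)) = [:0,1:] * ([:0,1:] * Pm i)"
    proof -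
      have "(\<Sum>k<i+1+1+1. smult (inf_mat_mult ?J ?J i k) (Pm k))
          = (\<Sum>l<i+1+1. smult (?J i l) (\<Sum>k<l+1+1. smult (?J l k) (Pm k)))"
        by (rule mult_poly[OF bandJ bandJ])
      also have "\<dots> = (\<Sum>l<Suc (Suc i). smult (?J i l) ([:0,1:] * Pm l))"
        by (simp only: Suc_eq_plus1[symmetric] RJm)
      also have "\<dots> = [:0,1:] * (\<Sum>l<Suc (Suc i). smult (?J i l) (Pm l))"
        by (simp only: sum_distrib_left mult_smult_right)
      also have "\<dots> = [:0,1:] * ([:0,1:] * Pm i)" by (simp only: RJm)
      finally show ?thesis by (simp only: Suc_eq_plus1[symmetric])
    qed
    have s2: "(\<Sum>k<Suc (Suc (Suc i)). smult (inf_mat_mult (Lmat P b) (Umat Pm) i k) (Pm k)) = [:0,1:] * ([:0,1:] * Pm i)"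
    proof -
      have "(\<Sum>k<i+0+2+1. smult (inf_mat_mult (Lmat P b) (Umat Pm) i k) (Pm k))
          = (\<Sum>l<i+0+1. smult (Lmat P b i l) (\<Sum>k<l+2+1. smult (Umat Pm l k) (Pm k)))"
        by (rule mult_poly[OF bandL bandU])
      also have "\<dots> = (\<Sum>l<Suc i. smult (Lmat P b i l) ([:0,1:] * ([:0,1:] * ?A l)))"
        by (simp only: add_0_right Suc_eq_plus1[symmetric] RU numeral_2_eq_2 add_Suc_right)
      also have "\<dots> = [:0,1:] * ([:0,1:] * (\<Sum>l<Suc i. smult (Lmat P b i l) (?A l)))"
        by (simp only: sum_distrib_left mult_smult_right)
      also have "\<dots> = [:0,1:] * ([:0,1:] * Pm i)" by (simp only: RL)
      finally show ?thesis by (simp only: add_0_right Suc_eq_plus1[symmetric] numeral_2_eq_2 add_Suc_right)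
    qed
    show ?thesis
      by (rule uniq_basis[OF mP _ True]) (simp only: s1 s2)
  next
    case False
    then have "j > i+1+1" "j > i+0+2" by auto
    then show ?thesis using mult_zero[OF bandJ bandJ] mult_zero[OF bandL bandU] by simp
  qed
qed

end

theorem mainTheorem8:
  fixes u :: "nat \<Rightarrow> complex"
    and P Pm :: "nat \<Rightarrow> complex poly"
    and a b am bm :: "nat \<Rightarrow> complex"
  assumes qd: "quasi_definite u"
    and smop: "is_SMOP u P"
    and rec: "three_term P a b"
    and qd_inv: "quasi_definite (inv_moments u)"
    and smop_inv: "is_SMOP (inv_moments u) Pm"
    and rec_inv: "three_term Pm am bm"
  shows "(\<forall>n\<ge>2. W0 (P n) (P (n - 1)) \<noteq> 0)
    \<and> (\<forall>n. W0 (Pm n) (Pm (n + 1)) \<noteq> 0)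
    \<and> Pm 0 = assoc1 a b 0
    \<and> Pm 1 = assoc1 a b 1 + smult (alpha1 P b 1) (assoc1 a b 0)
    \<and> (\<forall>n\<ge>2. Pm n = assoc1 a b n + smult (alpha1 P b n) (assoc1 a b (n - 1))
                     + smult (alpha2 P n) (assoc1 a b (n - 2)))
    \<and> (\<forall>n. [:0, 0, 1:] * assoc1 a b n = Pm (n + 2) + smult (beta1 Pm n) (Pm (n + 1))
                     + smult (beta0 Pm n) (Pm n))
    \<and> inf_mat_mult (monic_jacobi (\<lambda>k. a (Suc k)) (\<lambda>k. b (Suc k)))
                   (monic_jacobi (\<lambda>k. a (Suc k)) (\<lambda>k. b (Suc k)))
        = inf_mat_mult (Umat Pm) (Lmat P b)
    \<and> inf_mat_mult (monic_jacobi am bm) (monic_jacobi am bm)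
        = inf_mat_mult (Lmat P b) (Umat Pm)"
proof -
  note H = smop rec smop_inv rec_inv
  have p1: "\<forall>n\<ge>2. W0 (P n) (P (n - 1)) \<noteq> 0"
  proof (intro allI impI)
    fix n :: nat assume n2: "2 \<le> n"
    define k where "k = n - 2"
    have n: "n = Suc (Suc k)" using n2 unfolding k_def by arith
    show "W0 (P n) (P (n - 1)) \<noteq> 0" using T1[OF H, of k] unfolding n by simp
  qed
  have p2: "\<forall>n. W0 (Pm n) (Pm (n + 1)) \<noteq> 0" using T2[OF H] by simp
  have p3: "Pm 0 = assoc1 a b 0" using Pm0[OF H] by simp
  have p4: "Pm 1 = assoc1 a b 1 + smult (alpha1 P b 1) (assoc1 a b 0)" by (rule T3[OF H])
  have p5: "\<forall>n\<ge>2. Pm n = assoc1 a b n + smult (alpha1 P b n) (assoc1 a b (n - 1))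
                     + smult (alpha2 P n) (assoc1 a b (n - 2))"
  proof (intro allI impI)
    fix n :: nat assume n2: "2 \<le> n"
    define k where "k = n - 2"
    have n: "n = Suc (Suc k)" using n2 unfolding k_def by arith
    show "Pm n = assoc1 a b n + smult (alpha1 P b n) (assoc1 a b (n - 1))
                     + smult (alpha2 P n) (assoc1 a b (n - 2))"
      using T4[OF H, of k] unfolding n by simp
  qed
  have p6: "\<forall>n. [:0, 0, 1:] * assoc1 a b n = Pm (n + 2) + smult (beta1 Pm n) (Pm (n + 1))
                     + smult (beta0 Pm n) (Pm n)" using T5[OF H] by blast
  show ?thesis using p1 p2 p3 p4 p5 p6 MJ[OF H] MLU[OF H] by blast
qed

end
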